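(* For $k\in\mathbb N_0$ and real $\alpha\ge0$ let $S^{(\alpha)}_k=\sum_{p\in\mathbb P_k}p^{-\alpha}$, where $\mathbb P_k=\{p^{(k)}_n:n\in\mathbb N\}$. The series $S^{(\alpha)}_k$ converges if and only if $\alpha>1$, or $\alpha=1$ and $k\ge2$. Moreover, for each $\alpha\ge1$, $S^{(\alpha)}_k\to0$ as $k\to+\infty$.
   Context: Let $p_n$ denote the $n$-th prime number. Define $p^{(0)}_n=n$ and recursively $p^{(k+1)}_n=p_{p^{(k)}_n}$ for $k\in\mathbb N_0$. *)

theory Defs
  imports "HOL-Analysis.Analysis" "HOL-Computational_Algebra.Primes" "HOL-Library.Infinite_Set"
begin

text \<open>The n-th prime, 1-indexed: nth_prime 1 = 2, nth_prime 2 = 3, ...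
  (the value at 0 is irrelevant and never used).\<close>
definition nth_prime :: "nat \<Rightarrow> nat" where
  "nth_prime n = enumerate {p::nat. prime p} (n - 1)"

definition iter_prime :: "nat \<Rightarrow> nat \<Rightarrow> nat" where
  "iter_prime k n = (nth_prime ^^ k) n"

definition prime_level_set :: "nat \<Rightarrow> nat set" where
  "prime_level_set k = iter_prime k ` {1..}"

end

theory Submission
  imports Defs "HOL-Number_Theory.Prime_Powers"
begin

definition psi :: "nat \<Rightarrow> real" where
  "psi N = (\<Sum>d\<in>{1..N}. mangoldt d)"

lemma card_multiples:
  assumes "d > 0"
  shows "card {k\<in>{1..n::nat}. d dvd k} = n div d"
proof -
  have "{k\<in>{1..n}. d dvd k} = (\<lambda>j. d*j) ` {1..n div d}"
  proof (intro set_eqI iffI)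
    fix k assume "k \<in> {k\<in>{1..n}. d dvd k}"
    then obtain j where j: "k = d*j" "1 \<le> k" "k \<le> n" by auto
    hence "j \<ge> 1" by (cases j) auto
    moreover have "j \<le> n div d" using j assms
      by (metis div_le_mono nonzero_mult_div_cancel_left not_gr_zero)
    ultimately show "k \<in> (\<lambda>j. d*j) ` {1..n div d}" using j by auto
  next
    fix k assume "k \<in> (\<lambda>j. d*j) ` {1..n div d}"
    then obtain j where j0: "j \<in> {1..n div d}" "k = d*j" by blast
    hence j: "k = d*j" "1 \<le> j" "j \<le> n div d" by auto
    have "d * j \<le> d * (n div d)" using j by simp
    also have "\<dots> \<le> n" by simp
    finally show "k \<in> {k\<in>{1..n}. d dvd k}" using j assms by auto
  qed
  also have "card \<dots> = n div d"
    by (subst card_image) (auto simp: inj_on_def assms)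
  finally show ?thesis .
qed

lemma ln_fact_mangoldt:
  "ln (fact n :: real) = (\<Sum>d\<in>{1..n}. mangoldt d * real (n div d))"
proof -
  have "ln (fact n :: real) = ln (\<Prod>k\<in>{1..n}. real k)"
    by (simp add: fact_prod)
  also have "\<dots> = (\<Sum>k\<in>{1..n}. ln (real k))"
    by (subst ln_prod) auto
  also have "\<dots> = (\<Sum>k\<in>{1..n}. \<Sum>d\<in>{d\<in>{1..n}. d dvd k}. (mangoldt d :: real))"
  proof (intro sum.cong refl)
    fix k assume k: "k \<in> {1..n}"
    have "{d\<in>{1..n}. d dvd k} = {d. d dvd k}"
      using k by (auto intro: dvd_imp_le dest: dvd_imp_le)
    then show "ln (real k) = (\<Sum>d\<in>{d\<in>{1..n}. d dvd k}. (mangoldt d :: real))"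
      using k mangoldt_sum[of k, where 'a=real] by simp
  qed
  also have "\<dots> = (\<Sum>d\<in>{1..n}. \<Sum>k\<in>{k\<in>{1..n}. d dvd k}. (mangoldt d :: real))"
    by (rule sum.swap_restrict) auto
  also have "\<dots> = (\<Sum>d\<in>{1..n}. mangoldt d * real (n div d))"
  proof (intro sum.cong refl)
    fix d assume "d \<in> {1..n}"
    then show "(\<Sum>k\<in>{k\<in>{1..n}. d dvd k}. (mangoldt d :: real)) = mangoldt d * real (n div d)"
      using card_multiples[of d n] by simp
  qed
  finally show ?thesis .
qed

lemma ln_fact_mangoldt':
  assumes "n \<le> N"
  shows "ln (fact n :: real) = (\<Sum>d\<in>{1..N}. mangoldt d * real (n div d))"
proof -
  have "ln (fact n :: real) = (\<Sum>d\<in>{1..n}. mangoldt d * real (n div d))"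
    by (rule ln_fact_mangoldt)
  also have "\<dots> = (\<Sum>d\<in>{1..N}. mangoldt d * real (n div d))"
    using assms by (intro sum.mono_neutral_left) auto
  finally show ?thesis .
qed

lemma div_double_bounds:
  assumes "(d::nat) > 0"
  shows "2 * (m div d) \<le> (2*m) div d" "(2*m) div d \<le> 2 * (m div d) + 1"
proof -
  obtain q r where qr: "m = d*q + r" "r < d"
    using assms by (metis div_mult_mod_eq mod_less_divisor mult.commute)
  have 1: "m div d = q" using qr by simp
  have "2*m = d*(2*q) + 2*r" using qr by simp
  hence 2: "(2*m) div d = 2*q + (2*r) div d" using assms by simp
  have "2*r < 2*d" using qr by simp
  hence "(2*r) div d < 2" by (metis less_mult_imp_div_less)
  hence "(2*r) div d \<le> 1" by simp
  then show "2 * (m div d) \<le> (2*m) div d" "(2*m) div d \<le> 2 * (m div d) + 1"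
    using 1 2 by auto
qed

lemma ln_central_binom:
  "ln (real ((2*m) choose m)) =
     (\<Sum>d\<in>{1..2*m}. mangoldt d * (real ((2*m) div d) - 2 * real (m div d)))"
proof -
  have "fact m * fact m * ((2*m) choose m) = (fact (2*m) :: nat)"
    using binomial_fact_lemma[of m "2*m"] by (simp add: mult_2)
  hence "real ((2*m) choose m) = fact (2*m) / (fact m * fact m)"
    by (simp add: field_simps flip: of_nat_mult) (metis of_nat_fact of_nat_mult)
  hence "ln (real ((2*m) choose m)) = ln (fact (2*m)) - 2 * ln (fact m :: real)"
    by (simp add: ln_div ln_mult)
  also have "\<dots> = (\<Sum>d\<in>{1..2*m}. mangoldt d * real ((2*m) div d))
                   - 2 * (\<Sum>d\<in>{1..2*m}. mangoldt d * real (m div d))"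
    by (subst ln_fact_mangoldt'[of "2*m" "2*m"], simp, subst ln_fact_mangoldt'[of m "2*m"]) simp_all
  also have "\<dots> = (\<Sum>d\<in>{1..2*m}. mangoldt d * (real ((2*m) div d) - 2 * real (m div d)))"
    by (simp add: sum_distrib_left sum_subtractf algebra_simps)
  finally show ?thesis .
qed

lemma central_binom_le_psi: "ln (real ((2*m) choose m)) \<le> psi (2*m)"
  unfolding ln_central_binom psi_def
proof (intro sum_mono)
  fix d assume d: "d \<in> {1..2*m}"
  have "real ((2*m) div d) - 2 * real (m div d) \<le> 1"
    using div_double_bounds(2)[of d m] d by simp
  then show "mangoldt d * (real ((2*m) div d) - 2 * real (m div d)) \<le> mangoldt d"
    using mangoldt_nonneg[of d] by (simp add: mult_left_le)
qed

lemma psi_double_le: "psi (2*m) - psi m \<le> ln (real ((2*m) choose m))"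
proof -
  have split: "{1..2*m} = {1..m} \<union> {m<..2*m}" by auto
  have "psi (2*m) = psi m + (\<Sum>d\<in>{m<..2*m}. mangoldt d)"
    unfolding psi_def split by (subst sum.union_disjoint) auto
  moreover have "(\<Sum>d\<in>{m<..2*m}. mangoldt d) \<le> ln (real ((2*m) choose m))"
  proof -
    have "(\<Sum>d\<in>{m<..2*m}. mangoldt d) =
          (\<Sum>d\<in>{m<..2*m}. mangoldt d * (real ((2*m) div d) - 2 * real (m div d)))"
    proof (intro sum.cong refl)
      fix d assume d: "d \<in> {m<..2*m}"
      hence "m div d = 0" by auto
      moreover have "(2*m) div d = 1"
      proof -
        have "d div d \<le> (2*m) div d" using d by (intro div_le_mono) auto
        hence "1 \<le> (2*m) div d" using d by simp
        moreover have "2*m < 2*d" using d by simp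
        hence "(2*m) div d < 2" by (metis less_mult_imp_div_less)
        ultimately show ?thesis by simp
      qed
      ultimately show "mangoldt d = mangoldt d * (real ((2*m) div d) - 2 * real (m div d))" by simp
    qed
    also have "\<dots> \<le> (\<Sum>d\<in>{1..2*m}. mangoldt d * (real ((2*m) div d) - 2 * real (m div d)))"
    proof (intro sum_mono2)
      fix d assume "d \<in> {1..2*m} - {m<..2*m}"
      hence "d > 0" by auto
      hence "real (2 * (m div d)) \<le> real ((2*m) div d)"
        using div_double_bounds(1)[of d m] by linarith
      thus "0 \<le> mangoldt d * (real ((2*m) div d) - 2 * real (m div d))"
        by (intro mult_nonneg_nonneg mangoldt_nonneg) simp
    qed auto
    finally show ?thesis unfolding ln_central_binom .
  qed
  ultimately show ?thesis by simp
qed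


lemma psi_mono: "N \<le> M \<Longrightarrow> psi N \<le> psi M"
  unfolding psi_def by (intro sum_mono2) (auto intro: mangoldt_nonneg)

lemma psi_nonneg: "psi N \<ge> 0"
  unfolding psi_def by (intro sum_nonneg) (auto intro: mangoldt_nonneg)

lemma psi_double_step: "psi (2*m) \<le> psi m + real m * ln 4"
proof -
  have "real ((2*m) choose m) \<le> 4 ^ m"
  proof -
    have "(2*m) choose m \<le> 2^(2*m)" by (rule binomial_le_pow2)
    also have "(2::nat)^(2*m) = 4^m" by (simp add: power_mult)
    finally show ?thesis by (metis of_nat_le_iff of_nat_numeral of_nat_power)
  qed
  moreover have "real ((2*m) choose m) > 0" by simp
  ultimately have "ln (real ((2*m) choose m)) \<le> ln (4^m)" by simp
  also have "\<dots> = real m * ln 4" by (simp add: ln_realpow)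
  finally show ?thesis using psi_double_le[of m] by simp
qed

lemma psi_linear: "psi N \<le> 3 * ln 4 * real N"
proof (induction N rule: less_induct)
  case (less N)
  have l4: "ln (4::real) > 0" by simp
  consider "N = 0" | "N = 1" | m where "N = 2*m" "m \<ge> 1" | m where "N = 2*m+1" "m \<ge> 1"
    by (metis One_nat_def add.commute add_0 le_add1 mult_0_right nat_le_linear not_less_eq_eq oddE
        plus_1_eq_Suc evenE le_numeral_extra(1) Suc_leI not_gr_zero)
  then show ?case
  proof cases
    case 1 then show ?thesis by (simp add: psi_def)
  next
    case 2 then show ?thesis by (simp add: psi_def)
  next
    case (3 m)
    have "psi N \<le> psi m + real m * ln 4" using psi_double_step 3 by simp
    also have "psi m \<le> 3 * ln 4 * real m" using less 3 by simp
    finally have "psi N \<le> 4 * ln 4 * real m" by (simp add: algebra_simps)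
    also have "\<dots> \<le> 6 * ln 4 * real m" using l4 by (intro mult_right_mono) auto
    finally show ?thesis using 3 by simp
  next
    case (4 m)
    have "psi N \<le> psi (2*(m+1))" using 4 by (intro psi_mono) simp
    also have "\<dots> \<le> psi (m+1) + real (m+1) * ln 4" by (rule psi_double_step)
    also have "m+1 < N" using 4 by simp
    hence "psi (m+1) \<le> 3 * ln 4 * real (m+1)" by (rule less.IH)
    finally have "psi N \<le> 4 * ln 4 * real (m+1)" by (simp add: algebra_simps)
    also have "\<dots> \<le> 3 * ln 4 * real N" using 4 l4 by (simp add: algebra_simps)
    finally show ?thesis .
  qed
qed

definition primepi :: "nat \<Rightarrow> nat" where
  "primepi N = card {p. prime p \<and> p \<le> N}"

lemma finite_exps:
  assumes p: "prime (p::nat)"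
  shows "finite {k. p ^ Suc k \<le> N}"
proof -
  have p2: "p \<ge> 2" using p by (simp add: prime_ge_2_nat)
  have "{k. p ^ Suc k \<le> N} \<subseteq> {..<N}"
  proof
    fix k assume "k \<in> {k. p ^ Suc k \<le> N}"
    hence "p ^ Suc k \<le> N" by simp
    moreover have "k < 2 ^ Suc k" by (induction k) auto
    moreover have "(2::nat) ^ Suc k \<le> p ^ Suc k" using p2 by (intro power_mono) auto
    ultimately show "k \<in> {..<N}" by simp
  qed
  thus ?thesis by (rule finite_subset) simp
qed

lemma card_exps_bound:
  assumes p: "prime (p::nat)" and N: "N \<ge> 1"
  shows "real (card {k. p ^ Suc k \<le> N}) * ln (real p) \<le> ln (real N)"
proof -
  define K where "K = {k. p ^ Suc k \<le> N}"
  have p2: "p \<ge> 2" using p by (simp add: prime_ge_2_nat)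
  have fin: "finite K"
  proof -
    have "K \<subseteq> {..<N}"
    proof
      fix k assume "k \<in> K"
      hence "p ^ Suc k \<le> N" by (simp add: K_def)
      moreover have "k < 2 ^ Suc k" by (induction k) auto
      moreover have "(2::nat) ^ Suc k \<le> p ^ Suc k" using p2 by (intro power_mono) auto
      ultimately show "k \<in> {..<N}" by simp
    qed
    thus ?thesis by (rule finite_subset) simp
  qed
  show ?thesis
  proof (cases "K = {}")
    case True
    hence "card {k. p ^ Suc k \<le> N} = 0" by (simp add: K_def)
    then show ?thesis using N by simp
  next
    case False
    define M where "M = Max K"
    have "M \<in> K" using fin False by (simp add: M_def)
    hence pM: "p ^ Suc M \<le> N" by (simp add: K_def)
    have "K \<subseteq> {..M}" using fin by (auto simp: M_def)
    hence "card K \<le> Suc M" by (metis card_atMost card_mono finite_atMost)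
    hence "p ^ card K \<le> p ^ Suc M" using p2 by (intro power_increasing) auto
    also have "\<dots> \<le> N" by (rule pM)
    finally have "real (p ^ card K) \<le> real N" by simp
    hence "ln (real (p ^ card K)) \<le> ln (real N)" using p2 N by (subst ln_le_cancel_iff) auto
    hence "real (card K) * ln (real p) \<le> ln (real N)" using p2 by (simp add: ln_realpow)
    thus ?thesis by (simp only: K_def)
  qed
qed

lemma psi_le_primepi: "psi N \<le> real (primepi N) * ln (real N)"
proof (cases "N \<ge> 1")
  case False
  hence "N = 0" by simp
  then show ?thesis by (simp add: psi_def)
next
  case N: True
  define P where "P = {p::nat. prime p \<and> p \<le> N}"
  define A where "A = Sigma P (\<lambda>p. {k. p ^ Suc k \<le> N})"
  define D where "D = {d\<in>{1..N}. primepow d}"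
  have finP: "finite P" unfolding P_def by simp
  have "psi N = (\<Sum>d\<in>D. ln (real (aprimedivisor d)))"
    unfolding psi_def D_def
    by (intro sum.mono_neutral_cong_right) (auto simp: mangoldt_def)
  also have "bij_betw (\<lambda>(p,k). p ^ Suc k) A D"
  proof (rule bij_betw_subset[OF bij_betw_primepows])
    show "A \<subseteq> Collect prime \<times> UNIV" by (auto simp: A_def P_def)
    show "(\<lambda>(p,k). p ^ Suc k) ` A = D"
    proof (intro set_eqI iffI)
      fix d assume "d \<in> (\<lambda>(p,k). p ^ Suc k) ` A"
      then obtain pk where pk: "pk \<in> A" "d = (\<lambda>(p,k). p ^ Suc k) pk" by blast
      obtain p k where "pk = (p,k)" by (cases pk)
      with pk have "(p,k) \<in> A" "d = p ^ Suc k" by auto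
      then show "d \<in> D" using prime_gt_0_nat[of p]
        by (auto simp: A_def P_def D_def intro!: primepow_prime_power simp del: power_Suc)
    next
      fix d assume d: "d \<in> D"
      hence "d \<in> Collect primepow" by (simp add: D_def)
      then obtain pk where pk: "pk \<in> Collect prime \<times> UNIV" "d = (\<lambda>(p,k). p ^ Suc k) pk"
        using bij_betw_primepows[where 'a=nat] unfolding bij_betw_def by blast
      obtain p k where "pk = (p,k)" by (cases pk)
      with pk have "prime p" "d = p ^ Suc k" by auto
      moreover have "p \<le> p ^ Suc k" using \<open>prime p\<close> prime_gt_0_nat[of p]
        by (simp add: self_le_power)
      ultimately have "(p,k) \<in> A" using d by (auto simp: A_def P_def D_def simp del: power_Suc)
      thus "d \<in> (\<lambda>(p,k). p ^ Suc k) ` A" using \<open>d = p ^ Suc k\<close> by force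
    qed
  qed
  hence "(\<Sum>d\<in>D. ln (real (aprimedivisor d))) = (\<Sum>(p,k)\<in>A. ln (real (aprimedivisor (p ^ Suc k))))"
    by (subst sum.reindex_bij_betw[symmetric]) (auto simp: case_prod_unfold)
  also have "\<dots> = (\<Sum>(p,k)\<in>A. ln (real p))"
    by (intro sum.cong refl) (auto simp: A_def P_def aprimedivisor_prime_power simp del: power_Suc)
  also have "\<dots> = (\<Sum>p\<in>P. \<Sum>k\<in>{k. p ^ Suc k \<le> N}. ln (real p))"
    unfolding A_def by (rule sum.Sigma[symmetric]) (use finP finite_exps in \<open>auto simp: P_def simp del: power_Suc\<close>)
  also have "\<dots> = (\<Sum>p\<in>P. real (card {k. p ^ Suc k \<le> N}) * ln (real p))"
    by simp
  also have "\<dots> \<le> (\<Sum>p\<in>P. ln (real N))"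
    by (intro sum_mono card_exps_bound) (use N in \<open>auto simp: P_def\<close>)
  also have "\<dots> = real (primepi N) * ln (real N)" by (simp add: P_def primepi_def)
  finally show ?thesis .
qed


abbreviation pe :: "nat \<Rightarrow> nat" where "pe \<equiv> enumerate {p::nat. prime p}"

lemma inf_primes: "infinite {p::nat. prime p}" using primes_infinite by simp

lemma pe_prime: "prime (pe i)"
  using enumerate_in_set[OF inf_primes] by simp

lemma pe_mono: "i < j \<Longrightarrow> pe i < pe j"
  using enumerate_mono[OF _ inf_primes] by simp

lemma pe_strict_mono: "strict_mono pe"
  by (rule strict_monoI) (rule pe_mono)

lemma pe_inj: "inj_on pe A"
  using strict_mono_imp_inj_on[OF pe_strict_mono] by (meson inj_on_subset subset_UNIV)

lemma pe_mono_le: "i \<le> j \<Longrightarrow> pe i \<le> pe j"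
  using pe_mono by (metis le_less)

lemma pe_ge: "pe i \<ge> i + 2"
proof (induction i)
  case 0 then show ?case using prime_ge_2_nat[OF pe_prime[of 0]] by simp
next
  case (Suc i) then show ?case using pe_mono[of i "Suc i"] by simp
qed

lemma pe_surj: "prime q \<Longrightarrow> \<exists>i. pe i = q"
  using enumerate_Ex[OF inf_primes] by simp

lemma nth_prime_pe: "nth_prime n = pe (n - 1)"
  by (simp add: nth_prime_def)

lemma primepi_below:
  assumes "N < pe n"
  shows "primepi N \<le> n"
proof -
  have "{p. prime p \<and> p \<le> N} \<subseteq> pe ` {..<n}"
  proof
    fix q assume q: "q \<in> {p. prime p \<and> p \<le> N}"
    then obtain i where i: "pe i = q" using pe_surj by auto
    have "i < n"
    proof (rule ccontr)
      assume "\<not> i < n"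
      hence "pe n \<le> pe i" by (intro pe_mono_le) simp
      thus False using q i assms by auto
    qed
    thus "q \<in> pe ` {..<n}" using i by auto
  qed
  hence "primepi N \<le> card (pe ` {..<n})" unfolding primepi_def
    by (intro card_mono) auto
  also have "\<dots> \<le> n" using card_image_le[of "{..<n}" pe] by simp
  finally show ?thesis .
qed

lemma psi_pe_lower:
  "real (n - n div 2) * ln (real (n div 2 + 2)) \<le> psi (pe (n - 1))"
proof (cases "n = 0")
  case True then show ?thesis using psi_nonneg by simp
next
  case False
  define I where "I = {n div 2..<n}"
  have "real (n - n div 2) * ln (real (n div 2 + 2)) = (\<Sum>i\<in>I. ln (real (n div 2 + 2)))"
    by (simp add: I_def)
  also have "\<dots> \<le> (\<Sum>i\<in>I. ln (real (pe i)))"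
  proof (intro sum_mono)
    fix i assume "i \<in> I"
    hence "n div 2 + 2 \<le> pe i" using pe_ge[of i] by (simp add: I_def)
    thus "ln (real (n div 2 + 2)) \<le> ln (real (pe i))" by simp
  qed
  also have "\<dots> = (\<Sum>d\<in>pe ` I. ln (real d))"
    by (subst sum.reindex) (auto simp: pe_inj)
  also have "\<dots> = (\<Sum>d\<in>pe ` I. mangoldt d)"
    by (intro sum.cong refl) (auto simp: pe_prime)
  also have "\<dots> \<le> (\<Sum>d\<in>{1..pe (n-1)}. mangoldt d)"
  proof (intro sum_mono2)
    show "pe ` I \<subseteq> {1..pe (n-1)}"
    proof
      fix d assume "d \<in> pe ` I"
      then obtain i where "i \<in> I" "d = pe i" by blast
      moreover have "pe i \<ge> 1" using pe_ge[of i] by simp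
      moreover have "pe i \<le> pe (n-1)" using \<open>i \<in> I\<close> by (intro pe_mono_le) (auto simp: I_def)
      ultimately show "d \<in> {1..pe (n-1)}" by simp
    qed
  qed (auto intro: mangoldt_nonneg)
  finally show ?thesis by (simp add: psi_def)
qed


lemma nth_prime_ge: "n \<ge> 1 \<Longrightarrow> nth_prime n \<ge> n + 1"
  using pe_ge[of "n-1"] by (simp add: nth_prime_pe)

lemma nth_prime_lower:
  assumes n: "n \<ge> 1"
  shows "real n * ln (real n + 2) / (12 * ln 4) \<le> real (nth_prime n)"
proof -
  define q where "q = n div 2"
  define x where "x = nth_prime n"
  have l4: "ln (4::real) > 0" by simp
  have hq: "real (n - q) \<ge> real n / 2" unfolding q_def by linarith
  have "n \<le> 2*q+1" unfolding q_def by linarith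
  moreover have "(q+2)^2 = q*q + 4*q + 4" by (simp add: power2_eq_square algebra_simps)
  ultimately have "n + 2 \<le> (q + 2)^2" by simp
  hence "real (n + 2) \<le> real ((q+2)^2)" by (simp only: of_nat_le_iff)
  hence "real n + 2 \<le> real ((q+2)^2)" by simp
  hence "ln (real n + 2) \<le> ln (real ((q+2)^2))"
    by (subst ln_le_cancel_iff) auto
  also have "\<dots> = 2 * ln (real (q + 2))" by (simp add: ln_realpow)
  finally have hl: "ln (real n + 2) / 2 \<le> ln (real (q+2))" by simp
  have lnpos: "ln (real n + 2) \<ge> 0" by simp
  have "real n * ln (real n + 2) / 4 = (real n / 2) * (ln (real n + 2) / 2)" by simp
  also have "\<dots> \<le> real (n - q) * ln (real (q + 2))"
    using hq hl lnpos by (intro mult_mono) auto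
  also have "\<dots> \<le> psi x"
    using psi_pe_lower[of n] by (simp add: x_def nth_prime_pe q_def)
  also have "\<dots> \<le> 3 * ln 4 * real x" by (rule psi_linear)
  finally have "real n * ln (real n + 2) / 4 \<le> 3 * ln 4 * real x" .
  thus ?thesis using l4 by (simp add: x_def field_simps)
qed

lemma key_ineq:
  assumes n: "n \<ge> 1"
  shows "(real (nth_prime n) - 2) * ln 2 \<le> real n * ln (real (nth_prime n))"
proof -
  define x where "x = nth_prime n"
  have x2: "x \<ge> 2" using nth_prime_ge[OF n] n by (simp add: x_def)
  define m where "m = (x - 1) div 2"
  show ?thesis
  proof (cases "m = 0")
    case True
    hence "x \<le> 2" unfolding m_def by linarith
    hence "x = 2" using x2 by simp
    thus ?thesis using n by (simp add: x_def[symmetric])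
  next
    case False
    hence m1: "m \<ge> 1" by simp
    have "2*m < pe (n-1)" unfolding m_def using x2 by (simp add: x_def nth_prime_pe)
    hence pp: "primepi (2*m) \<le> n - 1" by (rule primepi_below)
    have "4 ^ m / (2 * real m) \<le> real ((2*m) choose m)"
      using central_binomial_lower_bound[of m] m1 by simp
    hence "ln (4 ^ m / (2 * real m)) \<le> ln (real ((2*m) choose m))"
      using m1 by (subst ln_le_cancel_iff) auto
    moreover have "ln (4 ^ m / (2 * real m)) = real m * ln 4 - ln (2 * real m)"
      using m1 by (simp add: ln_div ln_realpow)
    ultimately have "real m * ln 4 - ln (2 * real m) \<le> psi (2*m)"
      using central_binom_le_psi[of m] by simp
    also have "\<dots> \<le> real (primepi (2*m)) * ln (real (2*m))" by (rule psi_le_primepi)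
    also have "\<dots> \<le> real (n - 1) * ln (2 * real m)"
    proof -
      have "ln (real (2*m)) \<ge> 0" using m1 by simp
      moreover have "real (primepi (2*m)) \<le> real (n-1)" using pp by linarith
      ultimately show ?thesis by (simp add: mult_right_mono)
    qed
    finally have "real m * ln 4 \<le> real n * ln (2 * real m)"
      using n by (simp add: of_nat_diff algebra_simps)
    also have "\<dots> \<le> real n * ln (real x)"
    proof -
      have "2 * m \<le> x" unfolding m_def by linarith
      hence "2 * real m \<le> real x" by linarith
      thus ?thesis using m1 by (intro mult_left_mono) auto
    qed
    finally have A: "real m * ln 4 \<le> real n * ln (real x)" .
    have "real x - 2 \<le> 2 * real m" unfolding m_def using x2 by linarith
    hence "(real x - 2) * ln 2 \<le> 2 * real m * ln 2" by (intro mult_right_mono) auto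
    also have "\<dots> = real m * ln 4"
      using ln_realpow[of 2 2] by (simp add: power2_eq_square)
    finally show ?thesis using A by (simp add: x_def)
  qed
qed


lemma upper_aux:
  fixes x n L :: real
  assumes x2: "x \<ge> 2" and n1: "n \<ge> 1" and L: "L > 0"
    and key: "(x - 2) * L \<le> n * ln x"
  shows "x \<le> (n * (2/L + 2))^2"
proof -
  define s where "s = sqrt x"
  have s0: "s \<ge> 0" and xs: "x = s^2" using x2 by (auto simp: s_def)
  have s2: "s \<ge> 1" using x2 by (simp add: s_def)
  have "ln x = 2 * ln s" using x2 by (simp add: s_def ln_sqrt)
  also have "ln s \<le> s - 1" using s2 by (intro ln_le_minus_one) simp
  finally have "ln x \<le> 2 * s" by simp
  hence "n * ln x \<le> n * (2 * s)" using n1 by (intro mult_left_mono) auto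
  with key have b: "L * s^2 - 2 * L \<le> 2 * n * s" unfolding xs by (simp add: algebra_simps)
  have c: "s \<le> 2*n/L + 2"
  proof (rule ccontr)
    assume "\<not> ?thesis"
    hence h: "s > 2*n/L + 2" by simp
    hence "L * s > 2*n + 2*L" using L by (simp add: field_simps)
    hence "L * s - 2 * n > 2 * L" by simp
    moreover have "s > 2" using h n1 L by (smt (verit) divide_nonneg_pos)
    ultimately have "s * (L * s - 2 * n) > 2 * (2 * L)"
      using L by (intro mult_strict_mono) auto
    hence "L * s^2 - 2 * n * s > 4 * L" by (simp add: algebra_simps power2_eq_square)
    with b L show False by simp
  qed
  also have "2*n/L + 2 \<le> n * (2/L + 2)" using n1 L by (simp add: field_simps)
  finally have "s \<le> n * (2/L + 2)" .
  hence "s^2 \<le> (n * (2/L + 2))^2" using s0 by (intro power_mono) auto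
  thus ?thesis using xs by simp
qed

lemma nth_prime_upper:
  "\<exists>C>0. \<forall>n\<ge>1. real (nth_prime n) \<le> C * real n * ln (real n + 2)"
proof -
  define L :: real where "L = ln 2"
  define K :: real where "K = 2/L + 2"
  define C where "C = 2 / ln 3 + (2 + 2 * ln K / ln 3) / L"
  have L: "L > 0" by (simp add: L_def)
  have K: "K \<ge> 2" using L by (simp add: K_def)
  have l3: "ln (3::real) > 0" by simp
  have lK: "ln K \<ge> 0" using K by simp
  have "C > 0" unfolding C_def using L l3 lK by (intro add_pos_nonneg divide_pos_pos) auto
  moreover have "real (nth_prime n) \<le> C * real n * ln (real n + 2)" if n: "n \<ge> 1" for n
  proof -
    define x where "x = real (nth_prime n)"
    define l where "l = ln (real n + 2)"
    have x2: "x \<ge> 2" using nth_prime_ge[OF n] n by (simp add: x_def)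
    have n1: "real n \<ge> 1" using n by simp
    have key: "(x - 2) * L \<le> real n * ln x" using key_ineq[OF n] by (simp add: x_def L_def)
    have "x \<le> (real n * K)^2" using upper_aux[OF x2 n1 L key] by (simp add: K_def)
    hence "ln x \<le> ln ((real n * K)^2)" using x2 n K by (subst ln_le_cancel_iff) auto
    also have "\<dots> = 2 * ln (real n) + 2 * ln K" using n1 K by (simp add: ln_realpow ln_mult)
    finally have lx: "ln x \<le> 2 * ln (real n) + 2 * ln K" .
    have "(x - 2) * L \<le> real n * (2 * ln (real n) + 2 * ln K)"
      using key lx n1 by (smt (verit) mult_left_mono)
    hence x_le: "x \<le> 2 + real n * (2 * ln (real n) + 2 * ln K) / L"
      using L by (simp add: field_simps)
    have l_ge: "l \<ge> ln 3" unfolding l_def using n1 by (subst ln_le_cancel_iff) auto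
    have lnn: "ln (real n) \<le> l" unfolding l_def using n1 by (subst ln_le_cancel_iff) auto
    have t1: "2 \<le> 2 / ln 3 * (real n * l)"
    proof -
      have "ln 3 \<le> real n * l" using l_ge n1 l3
        by (metis mult_1 mult_right_mono order_trans less_imp_le)
      thus ?thesis using l3 by (simp add: field_simps)
    qed
    have t2: "real n * (2 * ln (real n) + 2 * ln K) \<le> real n * l * (2 + 2 * ln K / ln 3)"
    proof -
      have "ln K * ln 3 \<le> ln K * l" using l_ge lK by (intro mult_left_mono) auto
      hence "2 * ln K \<le> l * (2 * ln K / ln 3)" using l3
        by (simp add: field_simps)
      hence "2 * ln (real n) + 2 * ln K \<le> l * (2 + 2 * ln K / ln 3)"
        using lnn by (simp add: algebra_simps)
      thus ?thesis using n1 by (simp add: mult_left_mono mult.assoc)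
    qed
    have "x \<le> 2 / ln 3 * (real n * l) + real n * l * (2 + 2 * ln K / ln 3) / L"
      using x_le t1 t2 L by (smt (verit) divide_right_mono)
    also have "\<dots> = C * real n * l" by (simp add: C_def algebra_simps add_divide_distrib)
    finally show ?thesis by (simp add: x_def l_def)
  qed
  ultimately show ?thesis by blast
qed

lemma ln_le_powr_div:
  fixes y d :: real assumes "y > 0" "d > 0"
  shows "ln y \<le> y powr d / d"
proof -
  have "d * ln y = ln (y powr d)" using assms by simp
  also have "\<dots> \<le> y powr d - 1" using assms by (intro ln_le_minus_one) simp
  finally show ?thesis using assms by (simp add: field_simps)
qed

lemma nth_prime_poly:
  assumes b: "b > 1"
  shows "\<exists>C>0. \<forall>n\<ge>1. real (nth_prime n) \<le> C * real n powr b"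
proof -
  obtain C0 where C0: "C0 > 0" "\<forall>n\<ge>1. real (nth_prime n) \<le> C0 * real n * ln (real n + 2)"
    using nth_prime_upper by blast
  define d where "d = b - 1"
  have d: "d > 0" using b by (simp add: d_def)
  define C where "C = C0 * 3 powr d / d"
  have "C > 0" using C0 d by (simp add: C_def)
  moreover have "real (nth_prime n) \<le> C * real n powr b" if n: "n \<ge> 1" for n
  proof -
    have n1: "real n \<ge> 1" using n by simp
    have "ln (real n + 2) \<le> (real n + 2) powr d / d" using d by (intro ln_le_powr_div) auto
    also have "(real n + 2) powr d \<le> (3 * real n) powr d" using d n1 by (intro powr_mono2) auto
    also have "(3 * real n) powr d = 3 powr d * real n powr d" by (simp add: powr_mult)
    finally have "ln (real n + 2) \<le> 3 powr d * real n powr d / d" using d by (simp add: divide_right_mono)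
    hence "C0 * real n * ln (real n + 2) \<le> C0 * real n * (3 powr d * real n powr d / d)"
      using C0 n1 by (intro mult_left_mono) auto
    also have "\<dots> = C * (real n powr 1 * real n powr d)" by (simp add: C_def)
    also have "real n powr 1 * real n powr d = real n powr b"
      using n1 powr_add[of "real n" 1 d, symmetric] by (simp add: d_def)
    finally show ?thesis using C0(2) n by (meson order_trans)
  qed
  ultimately show ?thesis by blast
qed


lemma nonneg_summable_on_iff:
  fixes f :: "nat \<Rightarrow> real"
  assumes "\<And>n. f n \<ge> 0"
  shows "f summable_on {1..} \<longleftrightarrow> summable f"
proof -
  have "insert 0 {1::nat..} = UNIV" by auto
  hence "f summable_on {1..} \<longleftrightarrow> f summable_on UNIV"
    by (metis summable_on_insert_iff)
  also have "\<dots> \<longleftrightarrow> summable f" using assms by (rule summable_on_UNIV_nonneg_real_iff)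
  finally show ?thesis .
qed

lemma not_summable_inv: "\<not> summable (\<lambda>n. 1 / real n)"
  using not_summable_harmonic[where 'a=real] by (simp add: inverse_eq_divide)

lemma not_summable_nlog: "\<not> summable (\<lambda>n. 1 / (real n * ln (real n + 2)))"
proof
  define f where "f = (\<lambda>n. 1 / (real n * ln (real n + 2)))"
  assume "summable (\<lambda>n. 1 / (real n * ln (real n + 2)))"
  hence "summable f" by (simp add: f_def)
  moreover have "summable f \<longleftrightarrow> summable (\<lambda>j. 2^j * f (2^j))"
  proof (rule condensation_test)
    fix m :: nat assume m: "0 < m"
    have "real m * ln (real m + 2) \<le> real (Suc m) * ln (real (Suc m) + 2)"
      using m by (intro mult_mono) auto
    moreover have "real m * ln (real m + 2) > 0" using m by (intro mult_pos_pos) auto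
    ultimately show "f (Suc m) \<le> f m" unfolding f_def by (intro divide_left_mono) auto
  next
    fix n show "f n \<ge> 0" unfolding f_def by simp
  qed
  ultimately have s: "summable (\<lambda>j. 2^j * f (2^j))" by simp
  have "summable (\<lambda>j. 1 / ((real j + 2) * ln 2))"
  proof (rule summable_comparison_test'[OF s])
    fix j :: nat assume "j \<ge> 0"
    have eq: "2^j * f (2^j) = 1 / ln (2^j + 2)" by (simp add: f_def)
    have "(2::real)^j + 2 \<le> 2^(j+2)" by (induction j) auto
    hence "ln ((2::real)^j + 2) \<le> ln (2^(j+2))" by (subst ln_le_cancel_iff) auto
    also have "\<dots> = real (j+2) * ln 2" by (subst ln_realpow) auto
    also have "\<dots> = (real j + 2) * ln 2" by simp
    finally have "ln ((2::real)^j + 2) \<le> (real j + 2) * ln 2" .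
    moreover have "(0::real) \<le> 2^j" by simp
    hence "1 < (2::real)^j + 2" by linarith
    hence "ln ((2::real)^j + 2) > 0" by (rule ln_gt_zero)
    ultimately show "norm (1 / ((real j + 2) * ln 2)) \<le> 2^j * f (2^j)"
      unfolding eq by (simp add: frac_le)
  qed
  hence "summable (\<lambda>j. ln 2 * (1 / ((real j + 2) * ln 2)))" by (rule summable_mult)
  hence "summable (\<lambda>j. 1 / real (j + 2))" by (simp add: add.commute)
  hence "summable (\<lambda>n. 1 / real n)" by (subst (asm) summable_iff_shift)
  thus False using not_summable_inv by simp
qed

lemma summable_nlog2: "summable (\<lambda>n. 1 / (real n * ln (real n + 2)^2))"
proof -
  define f where "f = (\<lambda>n. 1 / (real n * ln (real n + 2)^2))"
  have "summable f \<longleftrightarrow> summable (\<lambda>j. 2^j * f (2^j))"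
  proof (rule condensation_test)
    fix m :: nat assume m: "0 < m"
    have "real m * ln (real m + 2)^2 \<le> real (Suc m) * ln (real (Suc m) + 2)^2"
      using m by (intro mult_mono power_mono) auto
    moreover have "real m * ln (real m + 2)^2 > 0" using m by (intro mult_pos_pos) auto
    ultimately show "f (Suc m) \<le> f m" unfolding f_def by (intro divide_left_mono) auto
  next
    fix n show "f n \<ge> 0" unfolding f_def by simp
  qed
  moreover have "summable (\<lambda>j. 2^j * f (2^j))"
  proof (rule summable_comparison_test')
    show "summable (\<lambda>j. (1 / ln 2 ^ 2) * inverse (real j ^ 2))"
      by (intro summable_mult inverse_power_summable) simp
  next
    fix j :: nat assume j: "j \<ge> 1"
    have eq: "2^j * f (2^j) = 1 / ln (2^j + 2)^2" by (simp add: f_def)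
    have p: "(0::real) < 2^j + 2" by (intro add_pos_pos) auto
    have "ln ((2::real)^j) \<le> ln (2^j + 2)" using p by (subst ln_le_cancel_iff) auto
    hence "real j * ln 2 \<le> ln ((2::real)^j + 2)" by (simp add: ln_realpow)
    moreover have "real j * ln 2 > 0" using j by simp
    ultimately have "(real j * ln 2)^2 \<le> ln ((2::real)^j + 2)^2" by (intro power_mono) auto
    moreover have q: "(real j * ln 2)^2 > 0" using j by simp
    ultimately have r: "(real j * ln 2)^2 \<le> ln ((2::real)^j + 2)^2" "(real j * ln 2)^2 > 0" by auto
    have pos: "0 < ln ((2::real)^j + 2)^2 * (real j * ln 2)^2"
      using r by (meson mult_pos_pos less_le_trans)
    have "1 / ln ((2::real)^j + 2)^2 \<le> 1 / (real j * ln 2)^2"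
      by (rule divide_left_mono[OF r(1)]) (simp_all only: pos zero_le_one)
    also have "\<dots> = (1 / ln 2 ^ 2) * inverse (real j ^ 2)"
      by (simp add: field_simps power_mult_distrib)
    finally show "norm (2^j * f (2^j)) \<le> (1 / ln 2 ^ 2) * inverse (real j ^ 2)"
      unfolding eq by simp
  qed
  ultimately show ?thesis by (simp add: f_def)
qed

lemma summable_powr: "a > 1 \<Longrightarrow> summable (\<lambda>n. real n powr (-a))"
  by (subst summable_real_powr_iff) simp


lemma iter_0 [simp]: "iter_prime 0 n = n" by (simp add: iter_prime_def)
lemma iter_Suc [simp]: "iter_prime (Suc k) n = nth_prime (iter_prime k n)"
  by (simp add: iter_prime_def)

lemma iter_add: "iter_prime (j + k) n = iter_prime j (iter_prime k n)"
  by (simp add: iter_prime_def funpow_add)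

lemma iter_ge: "n \<ge> 1 \<Longrightarrow> iter_prime k n \<ge> n + k"
proof (induction k)
  case (Suc k)
  hence "iter_prime k n \<ge> 1" by simp
  then show ?case using nth_prime_ge[of "iter_prime k n"] Suc by simp
qed simp

lemma nth_prime_mono: "1 \<le> n \<Longrightarrow> n < m \<Longrightarrow> nth_prime n < nth_prime m"
  by (simp add: nth_prime_pe pe_mono)

lemma iter_mono: "1 \<le> n \<Longrightarrow> n < m \<Longrightarrow> iter_prime k n < iter_prime k m"
proof (induction k)
  case (Suc k)
  have "1 \<le> iter_prime k n" using iter_ge[of n k] Suc by simp
  then show ?case using Suc by (simp add: nth_prime_mono)
qed simp

lemma iter_inj: "inj_on (iter_prime k) {1..}"
proof (rule inj_onI)
  fix x y assume "x \<in> {1..}" "y \<in> {1..}" "iter_prime k x = iter_prime k y"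
  thus "x = y" using iter_mono[of x y k] iter_mono[of y x k]
    by (metis atLeast_iff linorder_neqE_nat less_irrefl)
qed

lemma iter_poly:
  "b > 1 \<Longrightarrow> \<exists>C>0. \<forall>n\<ge>1. real (iter_prime k n) \<le> C * real n powr b"
proof (induction k arbitrary: b)
  case 0
  have "real n \<le> 1 * real n powr b" if "n \<ge> 1" for n :: nat
    using powr_mono[of 1 b "real n"] 0 that by simp
  then show ?case by (intro exI[of _ 1]) auto
next
  case (Suc k)
  define c where "c = sqrt b"
  have c1: "c > 1" using Suc.prems by (simp add: c_def)
  have cc: "c * c = b" using Suc.prems by (simp add: c_def)
  obtain C1 where C1: "C1 > 0" "\<forall>n\<ge>1. real (iter_prime k n) \<le> C1 * real n powr c"
    using Suc.IH[OF c1] by blast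
  obtain C2 where C2: "C2 > 0" "\<forall>n\<ge>1. real (nth_prime n) \<le> C2 * real n powr c"
    using nth_prime_poly[OF c1] by blast
  have "real (iter_prime (Suc k) n) \<le> (C2 * C1 powr c) * real n powr b" if n: "n \<ge> 1" for n
  proof -
    have i1: "iter_prime k n \<ge> 1" using iter_ge[OF n, of k] n by simp
    have "real (iter_prime (Suc k) n) \<le> C2 * real (iter_prime k n) powr c"
      using C2(2) i1 by simp
    also have "real (iter_prime k n) powr c \<le> (C1 * real n powr c) powr c"
      using C1(2) n c1 by (intro powr_mono2) auto
    also have "(C1 * real n powr c) powr c = C1 powr c * real n powr b"
      using C1 by (simp add: powr_mult powr_powr cc)
    finally show ?thesis using C2 by (simp add: mult_left_mono mult.assoc)
  qed
  moreover have "C2 * C1 powr c > 0" using C1 C2 by simp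
  ultimately show ?case by blast
qed

definition hpow :: "real \<Rightarrow> nat \<Rightarrow> real" where
  "hpow a p = real p powr (-a)"

lemma hpow_nonneg: "hpow a p \<ge> 0" by (simp add: hpow_def)

lemma reindex_P:
  "hpow a summable_on prime_level_set k \<longleftrightarrow> (\<lambda>n. hpow a (iter_prime k n)) summable_on {1..}"
  unfolding prime_level_set_def by (subst summable_on_reindex[OF iter_inj]) (simp add: o_def)

lemma infsum_P:
  "infsum (hpow a) (iter_prime k ` A) = infsum (\<lambda>n. hpow a (iter_prime k n)) A" if "A \<subseteq> {1..}"
  using infsum_reindex[OF inj_on_subset[OF iter_inj that], of "hpow a"] by (simp add: o_def)

definition Gb :: "nat \<Rightarrow> real" where
  "Gb n = (12 * ln 4)^2 * (1 / (real n * ln (real n + 2)^2))"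

lemma Gb_nonneg: "Gb n \<ge> 0" by (simp add: Gb_def)

lemma Gb_summable: "summable Gb"
  unfolding Gb_def by (intro summable_mult summable_nlog2)

lemma iter2_bound:
  assumes n: "n \<ge> 1"
  shows "hpow 1 (iter_prime 2 n) \<le> Gb n"
proof -
  define a :: real where "a = 1 / (12 * ln 4)"
  have a: "a > 0" by (simp add: a_def)
  define q where "q = nth_prime n"
  have q: "q \<ge> n + 1" using nth_prime_ge[OF n] by (simp add: q_def)
  have l: "ln (real n + 2) > 0" by (simp add: ln_gt_zero)
  have lq: "ln (real n + 2) \<le> ln (real q + 2)" using q by (subst ln_le_cancel_iff) auto
  have "a * real n * ln (real n + 2) \<le> real q"
    using nth_prime_lower[OF n] by (simp add: a_def q_def)
  moreover have "a * real q * ln (real q + 2) \<le> real (nth_prime q)"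
    using nth_prime_lower[of q] q by (simp add: a_def)
  ultimately have "a * (a * real n * ln (real n + 2)) * ln (real n + 2) \<le> real (nth_prime q)"
    using a l lq by (smt (verit) mult_mono mult_nonneg_nonneg of_nat_0_le_iff mult_left_mono less_imp_le)
  hence le: "a^2 * (real n * ln (real n + 2)^2) \<le> real (iter_prime 2 n)"
    by (simp add: q_def numeral_2_eq_2 power2_eq_square algebra_simps)
  have pos: "a^2 * (real n * ln (real n + 2)^2) > 0" using a l n by simp
  have "hpow 1 (iter_prime 2 n) = 1 / real (iter_prime 2 n)" by (simp add: hpow_def)
  also have "\<dots> \<le> 1 / (a^2 * (real n * ln (real n + 2)^2))"
    using le pos by (intro divide_left_mono) auto
  also have "\<dots> = Gb n" by (simp add: Gb_def a_def field_simps)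
  finally show ?thesis .
qed

lemma summable_iter2: "(\<lambda>n. hpow 1 (iter_prime 2 n)) summable_on {1..}"
proof (rule summable_on_comparison_test)
  show "Gb summable_on {1..}" using nonneg_summable_on_iff[of Gb] Gb_nonneg Gb_summable by blast
qed (auto simp: iter2_bound hpow_nonneg)

lemma level_subset:
  assumes "k \<ge> 2"
  shows "prime_level_set k \<subseteq> iter_prime 2 ` {k - 1..}"
proof
  fix p assume "p \<in> prime_level_set k"
  then obtain n where n: "n \<ge> 1" "p = iter_prime k n" by (auto simp: prime_level_set_def)
  have "p = iter_prime 2 (iter_prime (k-2) n)" using n assms iter_add[of 2 "k-2" n]
    by (metis le_add_diff_inverse)
  moreover have "iter_prime (k-2) n \<ge> k - 1" using iter_ge[OF n(1), of "k-2"] assms n(1) by linarith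
  ultimately show "p \<in> iter_prime 2 ` {k - 1..}" by auto
qed

lemma summable_on_iter2_image: "hpow 1 summable_on iter_prime 2 ` {1..}"
  using summable_iter2 by (subst summable_on_reindex[OF iter_inj]) (simp add: o_def)

lemma conv1: "k \<ge> 2 \<Longrightarrow> hpow 1 summable_on prime_level_set k"
  by (rule summable_on_subset_banach[OF summable_on_iter2_image])
     (use level_subset in fastforce)

lemma conv_gt1:
  assumes "a > 1" shows "hpow a summable_on prime_level_set k"
proof -
  have "hpow a summable_on UNIV"
    unfolding hpow_def using summable_powr[OF assms] by (subst summable_on_UNIV_nonneg_real_iff) auto
  thus ?thesis by (rule summable_on_subset_banach) simp
qed

lemma conv_ge1:
  assumes "a \<ge> 1" "k \<ge> 2" shows "hpow a summable_on prime_level_set k"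
proof (rule summable_on_comparison_test[OF conv1[OF assms(2)]])
  fix p assume "p \<in> prime_level_set k"
  then obtain n where n: "n \<ge> 1" "p = iter_prime k n" by (auto simp: prime_level_set_def)
  hence "p \<ge> 1" using iter_ge[OF n(1), of k] by simp
  thus "hpow a p \<le> hpow 1 p" unfolding hpow_def by (intro powr_mono) (use assms in auto)
qed (simp add: hpow_nonneg)

lemma div_lt1:
  assumes a: "0 \<le> a" "a < 1"
  shows "\<not> hpow a summable_on prime_level_set k"
proof
  assume "hpow a summable_on prime_level_set k"
  hence s: "(\<lambda>n. hpow a (iter_prime k n)) summable_on {1..}" by (simp add: reindex_P)
  define g where "g = (if a \<le> 1/2 then 2 else 1/a)"
  have g1: "g > 1" using a by (auto simp: g_def field_simps)
  have ga: "g * a \<le> 1" using a by (auto simp: g_def)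
  obtain C where C: "C > 0" "\<forall>n\<ge>1. real (iter_prime k n) \<le> C * real n powr g"
    using iter_poly[OF g1] by blast
  have "(\<lambda>n. C powr (-a) * (1 / real n)) summable_on {1..}"
  proof (rule summable_on_comparison_test[OF s])
    fix n :: nat assume "n \<in> {1..}"
    hence n: "n \<ge> 1" by simp
    have i1: "real (iter_prime k n) > 0" using iter_ge[OF n, of k] n by simp
    have "C powr (-a) * (1 / real n) = C powr (-a) * real n powr (-1)" using n by simp
    also have "real n powr (-1) \<le> real n powr (-(g*a))" using n ga by (intro powr_mono) auto
    also have "C powr (-a) * real n powr (-(g*a)) = (C * real n powr g) powr (-a)"
      using C(1) by (simp add: powr_mult powr_powr)
    also have "\<dots> \<le> real (iter_prime k n) powr (-a)"
      using C(2) n a i1 by (intro powr_mono2') auto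
    finally show "C powr (-a) * (1 / real n) \<le> hpow a (iter_prime k n)"
      using C by (simp add: hpow_def mult_left_mono)
  qed (use C in simp)
  hence "summable (\<lambda>n. C powr (-a) * (1 / real n))" by (subst (asm) nonneg_summable_on_iff) auto
  hence "summable (\<lambda>n. C powr a * (C powr (-a) * (1 / real n)))" by (rule summable_mult)
  hence "summable (\<lambda>n. 1 / real n)" using C(1) by (simp add: powr_minus)
  thus False using not_summable_inv by simp
qed

lemma div_1:
  assumes "k \<le> 1"
  shows "\<not> hpow 1 summable_on prime_level_set k"
proof
  assume "hpow 1 summable_on prime_level_set k"
  hence s: "(\<lambda>n. hpow 1 (iter_prime k n)) summable_on {1..}" by (simp add: reindex_P)
  consider "k = 0" | "k = 1" using assms by linarith
  then show False
  proof cases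
    case 1
    hence "(\<lambda>n. 1 / real n) summable_on {1..}" using s
      by (simp add: hpow_def)
    hence "summable (\<lambda>n. 1 / real n)" by (subst (asm) nonneg_summable_on_iff) auto
    thus False using not_summable_inv by simp
  next
    case 2
    obtain C where C: "C > 0" "\<forall>n\<ge>1. real (nth_prime n) \<le> C * real n * ln (real n + 2)"
      using nth_prime_upper by blast
    have "(\<lambda>n. (1/C) * (1 / (real n * ln (real n + 2)))) summable_on {1..}"
    proof (rule summable_on_comparison_test[OF s])
      fix n :: nat assume "n \<in> {1..}"
      hence n: "n \<ge> 1" by simp
      have pos: "C * real n * ln (real n + 2) > 0" using C n by (simp add: ln_gt_zero)
      have "(1/C) * (1 / (real n * ln (real n + 2))) = 1 / (C * real n * ln (real n + 2))"
        by (simp add: field_simps)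
      also have "\<dots> \<le> 1 / real (nth_prime n)"
        using C(2) n pos nth_prime_ge[OF n] by (intro divide_left_mono) auto
      finally show "(1/C) * (1 / (real n * ln (real n + 2))) \<le> hpow 1 (iter_prime k n)"
        using 2 by (simp add: hpow_def)
    qed (use C in simp)
    hence "summable (\<lambda>n. (1/C) * (1 / (real n * ln (real n + 2))))"
      by (subst (asm) nonneg_summable_on_iff) (use C in auto)
    hence "summable (\<lambda>n. C * ((1/C) * (1 / (real n * ln (real n + 2)))))" by (rule summable_mult)
    hence "summable (\<lambda>n. 1 / (real n * ln (real n + 2)))" using C(1) by simp
    thus False using not_summable_nlog by simp
  qed
qed

lemma Gb_tail: "(\<lambda>m. infsum Gb {m..}) \<longlonglongrightarrow> 0"
proof -
  have eq: "infsum Gb {m..} = suminf Gb - (\<Sum>i<m. Gb i)" for m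
  proof -
    have "{m..} = (\<lambda>i. i + m) ` UNIV"
    proof (intro set_eqI iffI)
      fix x assume "x \<in> {m..}" thus "x \<in> (\<lambda>i. i + m) ` UNIV"
        by (intro image_eqI[of _ _ "x - m"]) auto
    qed auto
    hence "infsum Gb {m..} = infsum (\<lambda>i. Gb (i + m)) UNIV"
      by (simp add: infsum_reindex inj_on_def o_def)
    also have "summable (\<lambda>i. Gb (i + m))" using Gb_summable by simp
    hence "((\<lambda>i. Gb (i + m)) has_sum (\<Sum>i. Gb (i + m))) UNIV"
      by (intro norm_summable_imp_has_sum) (auto simp: Gb_nonneg summable_sums)
    hence "infsum (\<lambda>i. Gb (i + m)) UNIV = (\<Sum>i. Gb (i + m))" by (rule infsumI)
    also have "\<dots> = suminf Gb - (\<Sum>i<m. Gb i)" using Gb_summable by (rule suminf_minus_initial_segment)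
    finally show ?thesis .
  qed
  have "(\<lambda>m. suminf Gb - (\<Sum>i<m. Gb i)) \<longlonglongrightarrow> suminf Gb - suminf Gb"
    by (intro tendsto_diff tendsto_const summable_LIMSEQ Gb_summable)
  thus ?thesis by (simp add: eq)
qed

lemma limit_part:
  assumes a: "a \<ge> 1"
  shows "(\<lambda>k. infsum (hpow a) (prime_level_set k)) \<longlonglongrightarrow> 0"
proof (rule tendsto_sandwich[of "\<lambda>_. 0" _ _ "\<lambda>k. infsum Gb {k - 1..}"])
  show "\<forall>\<^sub>F k in sequentially. 0 \<le> infsum (hpow a) (prime_level_set k)"
    by (intro always_eventually allI infsum_nonneg) (simp add: hpow_nonneg)
  show "((\<lambda>_. 0) \<longlongrightarrow> (0::real)) sequentially" by simp
  have "(\<lambda>k. infsum Gb {Suc k - 1..}) \<longlonglongrightarrow> 0" using Gb_tail by simp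
  thus "(\<lambda>k. infsum Gb {k - 1..}) \<longlonglongrightarrow> 0" by (rule LIMSEQ_imp_Suc)
  show "\<forall>\<^sub>F k in sequentially. infsum (hpow a) (prime_level_set k) \<le> infsum Gb {k - 1..}"
  proof (rule eventually_sequentiallyI[of 2])
    fix k :: nat assume k: "k \<ge> 2"
    have sub: "{k - 1..} \<subseteq> {1..}" using k by auto
    have "infsum (hpow a) (prime_level_set k) \<le> infsum (hpow 1) (prime_level_set k)"
    proof (rule infsum_mono[OF conv_ge1[OF a k] conv1[OF k]])
      fix p assume "p \<in> prime_level_set k"
      then obtain n where n: "n \<ge> 1" "p = iter_prime k n" by (auto simp: prime_level_set_def)
      hence "p \<ge> 1" using iter_ge[OF n(1), of k] by simp
      thus "hpow a p \<le> hpow 1 p" unfolding hpow_def by (intro powr_mono) (use a in auto)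
    qed
    also have "\<dots> \<le> infsum (hpow 1) (iter_prime 2 ` {k - 1..})"
    proof (rule infsum_mono2[OF conv1[OF k] _ level_subset[OF k]])
      show "hpow 1 summable_on iter_prime 2 ` {k - 1..}"
        by (rule summable_on_subset_banach[OF summable_on_iter2_image]) (use sub in auto)
    qed (simp add: hpow_nonneg)
    also have "\<dots> = infsum (\<lambda>n. hpow 1 (iter_prime 2 n)) {k - 1..}"
      by (rule infsum_P[OF sub])
    also have "\<dots> \<le> infsum Gb {k - 1..}"
    proof (rule infsum_mono)
      show "(\<lambda>n. hpow 1 (iter_prime 2 n)) summable_on {k - 1..}"
        by (rule summable_on_subset_banach[OF summable_iter2 sub])
      have "Gb summable_on {1..}" using nonneg_summable_on_iff[of Gb] Gb_nonneg Gb_summable by blast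
      thus "Gb summable_on {k - 1..}" by (rule summable_on_subset_banach[OF _ sub])
    qed (use sub iter2_bound in auto)
    finally show "infsum (hpow a) (prime_level_set k) \<le> infsum Gb {k - 1..}" .
  qed
qed

lemma part1:
  assumes a: "a \<ge> 0"
  shows "hpow a summable_on prime_level_set k \<longleftrightarrow> (a > 1 \<or> (a = 1 \<and> k \<ge> 2))"
proof (cases "a > 1")
  case True then show ?thesis using conv_gt1 by simp
next
  case False
  show ?thesis
  proof (cases "a = 1")
    case True
    show ?thesis
    proof (cases "k \<ge> 2")
      case True then show ?thesis using conv1 \<open>a = 1\<close> by simp
    next
      case False then show ?thesis using div_1[of k] \<open>a = 1\<close> by simp
    qed
  next
    case False
    then show ?thesis using div_lt1[of a k] a \<open>\<not> a > 1\<close> by simp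
  qed
qed

theorem theorem3:
  shows "(\<forall>(k::nat) (\<alpha>::real). \<alpha> \<ge> 0 \<longrightarrow>
            ((\<lambda>p. real p powr (-\<alpha>)) summable_on prime_level_set k
               \<longleftrightarrow> (\<alpha> > 1 \<or> (\<alpha> = 1 \<and> k \<ge> 2))))
       \<and> (\<forall>\<alpha>::real. \<alpha> \<ge> 1 \<longrightarrow>
            (\<lambda>k. infsum (\<lambda>p. real p powr (-\<alpha>)) (prime_level_set k)) \<longlonglongrightarrow> 0)"
proof (intro conjI allI impI)
  fix k :: nat and a :: real
  assume a: "a \<ge> 0"
  have eq: "(\<lambda>p. real p powr (-a)) = hpow a" by (simp add: hpow_def fun_eq_iff)
  show "(\<lambda>p. real p powr (-a)) summable_on prime_level_set k \<longleftrightarrow> (a > 1 \<or> (a = 1 \<and> k \<ge> 2))"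
    using part1[OF a, of k] by (simp only: eq)
next
  fix a :: real assume a: "a \<ge> 1"
  have eq: "(\<lambda>p. real p powr (-a)) = hpow a" by (simp add: hpow_def fun_eq_iff)
  show "(\<lambda>k. infsum (\<lambda>p. real p powr (-a)) (prime_level_set k)) \<longlonglongrightarrow> 0"
    using limit_part[OF a] by (simp only: eq)
qed

end
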